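(* Let $(\mathcal{A}, \mathcal{B})$ be a stable cross-intersecting pair of families in $\mathcal{I}_{n, k}^r$. For any $A \in \mathcal{A}$ and $B \in \mathcal{B}$, there is some $i \in [n]$ with $(i, 1) \in A \cap B$.
   Context: $\Gamma_{n,k}$ is the disjoint union of $n$ copies of $K_k$, with vertices $(i,j)$, $i\in[n]$, $j\in[k]$; $\mathcal{I}_{n,k}^r$ is the set of its independent sets of size $r$. For $i\in[n]$, $s\in[2,k]$ and $X\in\mathcal{I}_{n,k}^r$, $P_{i,s}(X)=(X\setminus\{(i,s)\})\cup\{(i,1)\}$ if $(i,s)\in X$ and $P_{i,s}(X)=X$ otherwise; $\pi_{i,s}(\mathcal{F})=\{P_{i,s}(X): X\in\mathcal{F}\}\cup\{X\in\mathcal{F}: P_{i,s}(X)\in\mathcal{F}\}$. A family $\mathcal{F}$ is stable if $\pi_{i,s}(\mathcal{F})=\mathcal{F}$ for all $i\in[n]$, $s\in[2,k]$; a pair is stable if both families are. A pair $(\mathcal{A},\mathcal{B})$ of non-empty families is cross-intersecting if $A\cap B\neq\emptyset$ for all $A\in\mathcal{A},B\in\mathcal{B}$. *)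

theory Defs
  imports Main
begin

text \<open>Vertices of Gamma_{n,k}: pairs (i,j) with i in [n] = {1..n}, j in [k] = {1..k}.
  Two distinct vertices are adjacent iff they lie in the same copy of K_k (same i).\<close>

definition gamma_vertices :: "nat \<Rightarrow> nat \<Rightarrow> (nat \<times> nat) set" where
  "gamma_vertices n k = {1..n} \<times> {1..k}"

definition independent_sets :: "nat \<Rightarrow> nat \<Rightarrow> nat \<Rightarrow> (nat \<times> nat) set set" where
  "independent_sets n k r =
     {X. X \<subseteq> gamma_vertices n k \<and> card X = r \<and>
         (\<forall>x\<in>X. \<forall>y\<in>X. fst x = fst y \<longrightarrow> x = y)}"

definition P_shift :: "nat \<Rightarrow> nat \<Rightarrow> (nat \<times> nat) set \<Rightarrow> (nat \<times> nat) set" where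
  "P_shift i s X = (if (i, s) \<in> X then (X - {(i, s)}) \<union> {(i, 1)} else X)"

definition pi_shift :: "nat \<Rightarrow> nat \<Rightarrow> (nat \<times> nat) set set \<Rightarrow> (nat \<times> nat) set set" where
  "pi_shift i s F = {P_shift i s X | X. X \<in> F} \<union> {X \<in> F. P_shift i s X \<in> F}"

definition stable :: "nat \<Rightarrow> nat \<Rightarrow> (nat \<times> nat) set set \<Rightarrow> bool" where
  "stable n k F \<longleftrightarrow> (\<forall>i\<in>{1..n}. \<forall>s\<in>{2..k}. pi_shift i s F = F)"

definition cross_intersecting :: "'a set set \<Rightarrow> 'a set set \<Rightarrow> bool" where
  "cross_intersecting A B \<longleftrightarrow> A \<noteq> {} \<and> B \<noteq> {} \<and> (\<forall>a\<in>A. \<forall>b\<in>B. a \<inter> b \<noteq> {})"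

end

theory Submission
  imports Defs
begin

lemma stable_P:
  assumes "stable n k F" "X \<in> F" "i \<in> {1..n}" "s \<in> {2..k}"
  shows "P_shift i s X \<in> F"
proof -
  have "pi_shift i s F = F" using assms unfolding stable_def by blast
  moreover have "P_shift i s X \<in> pi_shift i s F" using assms(2) unfolding pi_shift_def by blast
  ultimately show ?thesis by simp
qed

lemma main_ind:
  assumes A: "A \<in> independent_sets n k r"
    and BB: "\<B> \<subseteq> independent_sets n k r" "stable n k \<B>"
    and ci: "\<forall>b\<in>\<B>. A \<inter> b \<noteq> {}"
  shows "card (A \<inter> B) = m \<Longrightarrow> B \<in> \<B> \<Longrightarrow> \<exists>i. (i, 1) \<in> A \<inter> B"
proof (induction m arbitrary: B rule: less_induct)
  case (less m B)
  show ?case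
  proof (rule ccontr)
    assume no: "\<not> (\<exists>i. (i, 1) \<in> A \<inter> B)"
    have "A \<inter> B \<noteq> {}" using ci less.prems(2) by blast
    then obtain i j where ij: "(i, j) \<in> A \<inter> B" by auto
    have j1: "j \<noteq> 1" using ij no by auto
    have Bi: "B \<in> independent_sets n k r" using BB less.prems(2) by auto
    hence "(i, j) \<in> gamma_vertices n k" using ij unfolding independent_sets_def by auto
    hence rng: "i \<in> {1..n}" "j \<in> {2..k}" using j1 unfolding gamma_vertices_def by auto
    have fin: "finite B" using Bi unfolding independent_sets_def gamma_vertices_def
      by (auto intro: finite_subset)
    define B' where "B' = P_shift i j B"
    have B'in: "B' \<in> \<B>" using stable_P[OF BB(2) less.prems(2) rng] B'_def by simp
    have notA: "(i, 1) \<notin> A" using A ij j1 unfolding independent_sets_def by force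
    have eq: "A \<inter> B' = (A \<inter> B) - {(i, j)}"
      using ij notA unfolding B'_def P_shift_def by auto
    have "card (A \<inter> B') < m"
    proof -
      have "finite (A \<inter> B)" using fin by simp
      hence "card ((A \<inter> B) - {(i, j)}) < card (A \<inter> B)" using ij by (rule card_Diff1_less)
      thus ?thesis using eq less.prems(1) by simp
    qed
    from less.IH[OF this refl B'in] obtain i' where "(i', 1) \<in> A \<inter> B'" by blast
    thus False using eq no by auto
  qed
qed

theorem lemma4p2:
  fixes n k r :: nat and \<A> \<B> :: "(nat \<times> nat) set set"
  assumes "\<A> \<subseteq> independent_sets n k r" and "\<B> \<subseteq> independent_sets n k r"
    and "stable n k \<A>" and "stable n k \<B>"
    and "cross_intersecting \<A> \<B>"
    and "A \<in> \<A>" and "B \<in> \<B>"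
  shows "\<exists>i\<in>{1..n}. (i, 1) \<in> A \<inter> B"
proof -
  have Ai: "A \<in> independent_sets n k r" using assms by auto
  have ci: "\<forall>b\<in>\<B>. A \<inter> b \<noteq> {}" using assms(5,6) unfolding cross_intersecting_def by auto
  obtain i where i1: "(i, 1) \<in> A \<inter> B" using main_ind[OF Ai assms(2,4) ci refl assms(7)] by blast
  moreover have "(i, 1) \<in> gamma_vertices n k" using i1 Ai unfolding independent_sets_def by auto
  ultimately show ?thesis unfolding gamma_vertices_def by auto
qed

end
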